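(* Let $\Phi$ and $\Xi$ be subsets of Euclidean spaces, let $H:\Phi\times\Xi\to\mathbb{R}$ be a deterministic function and, for each $n$, let $H_n:\Phi\times\Xi\to\mathbb{R}$ be a random function (built from a sample of size $n$) with $H_n(\phi,\xi)\to H(\phi,\xi)$ in probability for every $(\phi,\xi)$. Define $$\hat\phi=\arg\inf_{\phi\in\Phi}\sup_{\xi\in\Xi}H_n(\phi,\xi),\qquad \phi^*=\arg\inf_{\phi\in\Phi}\sup_{\xi\in\Xi}H(\phi,\xi),$$ and for $\phi\in\Phi$ write $\xi(\phi)=\arg\sup_{t}H(\phi,t)$, $\xi_n(\phi)=\arg\sup_tH_n(\phi,t)$. Assume: (A1) the estimate $\hat\phi$ exists (not necessarily uniquely); (A2) $\sup_{\xi,\phi}|H_n(\phi,\xi)-H(\phi,\xi)|\to0$ in probability; (A3) for every $\phi$, for every $\varepsilon>0$ and every $\tilde\xi$ with $\|\tilde\xi-\xi(\phi)\|>\varepsilon$, there exists $\eta>0$ with $H(\phi,\xi(\phi))-H(\phi,\tilde\xi)>\eta$; (A4) the infimum of $\phi\mapsto H(\phi,\xi(\phi))$ is unique and isolated: for every $\varepsilon>0$ and every $\phi$ with $\|\phi-\phi^*\|>\varepsilon$, there exists $\eta>0$ with $H(\phi,\xi(\phi))-H(\phi^*,\xi(\phi^* ))>\eta$; (A5) for every $\phi\in\Phi$, the function $\xi\mapsto H(\phi,\xi)$ is continuous. Then $\hat\phi\to\phi^*$ in probability. *)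

theory Defs
  imports "HOL-Probability.Probability"
begin

definition outer_prob :: "'w measure \<Rightarrow> 'w set \<Rightarrow> real" where
  "outer_prob M A = (INF B \<in> {B \<in> sets M. A \<inter> space M \<subseteq> B}. measure M B)"

definition conv_in_prob :: "'w measure \<Rightarrow> (nat \<Rightarrow> 'w \<Rightarrow> 'a::metric_space) \<Rightarrow> 'a \<Rightarrow> bool" where
  "conv_in_prob M X c \<longleftrightarrow>
     (\<forall>e>0. (\<lambda>n. outer_prob M {\<omega> \<in> space M. dist (X n \<omega>) c > e}) \<longlonglongrightarrow> 0)"

end

theory Submission
  imports Defs
begin


lemma outer_prob_mono:
  assumes "A \<subseteq> B"
  shows "outer_prob M A \<le> outer_prob M B"
  unfolding outer_prob_def
proof (rule cINF_superset_mono)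
  show "{C \<in> sets M. B \<inter> space M \<subseteq> C} \<noteq> {}" by auto
  show "bdd_below (measure M ` {C \<in> sets M. A \<inter> space M \<subseteq> C})"
    by (rule bdd_belowI[of _ 0]) auto
  show "{C \<in> sets M. B \<inter> space M \<subseteq> C} \<subseteq> {C \<in> sets M. A \<inter> space M \<subseteq> C}"
    using assms by auto
qed simp

lemma outer_prob_nonneg: "0 \<le> outer_prob M A"
  unfolding outer_prob_def
  by (rule cINF_greatest) auto

theorem theorem1:
  fixes M :: "'w measure"
    and Phi :: "'p::euclidean_space set" and Xi :: "'x::euclidean_space set"
    and H :: "'p \<Rightarrow> 'x \<Rightarrow> real"
    and Hn :: "nat \<Rightarrow> 'w \<Rightarrow> 'p \<Rightarrow> 'x \<Rightarrow> real"
    and xi :: "'p \<Rightarrow> 'x"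
    and phihat :: "nat \<Rightarrow> 'w \<Rightarrow> 'p" and phistar :: "'p"
  assumes "prob_space M"
    and random: "\<And>n phi x. (\<lambda>\<omega>. Hn n \<omega> phi x) \<in> borel_measurable M"
    and pointwise: "\<And>phi x. phi \<in> Phi \<Longrightarrow> x \<in> Xi \<Longrightarrow>
                       conv_in_prob M (\<lambda>n \<omega>. Hn n \<omega> phi x) (H phi x)"
    and xi_def: "\<And>phi. phi \<in> Phi \<Longrightarrow> xi phi \<in> Xi \<and> (\<forall>t\<in>Xi. H phi t \<le> H phi (xi phi))"
    and phistar_def: "phistar \<in> Phi \<and>
          (\<forall>phi\<in>Phi. (SUP x\<in>Xi. ereal (H phistar x)) \<le> (SUP x\<in>Xi. ereal (H phi x)))"
    and A1: "\<And>n \<omega>. \<omega> \<in> space M \<Longrightarrow> phihat n \<omega> \<in> Phi \<and>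
          (\<forall>phi\<in>Phi. (SUP x\<in>Xi. ereal (Hn n \<omega> (phihat n \<omega>) x)) \<le> (SUP x\<in>Xi. ereal (Hn n \<omega> phi x)))"
    and A2: "\<And>e. e > 0 \<Longrightarrow> (\<lambda>n. outer_prob M
              {\<omega> \<in> space M. \<exists>phi\<in>Phi. \<exists>x\<in>Xi. \<bar>Hn n \<omega> phi x - H phi x\<bar> > e}) \<longlonglongrightarrow> 0"
    and A3: "\<And>phi e. phi \<in> Phi \<Longrightarrow> e > 0 \<Longrightarrow> \<exists>eta>0. \<forall>t\<in>Xi.
              norm (t - xi phi) > e \<longrightarrow> H phi (xi phi) - H phi t > eta"
    and A4: "\<And>e. e > 0 \<Longrightarrow> \<exists>eta>0. \<forall>phi\<in>Phi.
              norm (phi - phistar) > e \<longrightarrow> H phi (xi phi) - H phistar (xi phistar) > eta"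
    and A5: "\<And>phi. phi \<in> Phi \<Longrightarrow> continuous_on Xi (H phi)"
  shows "conv_in_prob M phihat phistar"
  
  unfolding conv_in_prob_def
proof (intro allI impI)
  fix e :: real assume e: "e > 0"
  obtain eta where eta: "eta > 0" and etaP: "\<And>phi. phi \<in> Phi \<Longrightarrow>
      norm (phi - phistar) > e \<Longrightarrow> H phi (xi phi) - H phistar (xi phistar) > eta"
    using A4[OF e] by blast
  define d where "d = eta / 3"
  have d: "d > 0" using eta by (simp add: d_def)
  define Bad where "Bad n = {\<omega> \<in> space M. \<exists>phi\<in>Phi. \<exists>x\<in>Xi. \<bar>Hn n \<omega> phi x - H phi x\<bar> > d}" for n
  have sub: "{\<omega> \<in> space M. dist (phihat n \<omega>) phistar > e} \<subseteq> Bad n" for n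
  proof
    fix \<omega> assume w: "\<omega> \<in> {\<omega> \<in> space M. dist (phihat n \<omega>) phistar > e}"
    hence sp: "\<omega> \<in> space M" and dd: "norm (phihat n \<omega> - phistar) > e"
      by (auto simp: dist_norm)
    show "\<omega> \<in> Bad n"
    proof (rule ccontr)
      assume "\<omega> \<notin> Bad n"
      hence good: "\<And>phi x. phi \<in> Phi \<Longrightarrow> x \<in> Xi \<Longrightarrow> \<bar>Hn n \<omega> phi x - H phi x\<bar> \<le> d"
        using sp by (auto simp: Bad_def not_less)
      define p where "p = phihat n \<omega>"
      have pP: "p \<in> Phi" and opt: "(SUP x\<in>Xi. ereal (Hn n \<omega> p x)) \<le> (SUP x\<in>Xi. ereal (Hn n \<omega> phistar x))"
        using A1[OF sp] phistar_def by (auto simp: p_def)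
      have xp: "xi p \<in> Xi" using xi_def[OF pP] by auto
      have ps: "phistar \<in> Phi" using phistar_def by auto
      have "ereal (H p (xi p) - d) \<le> ereal (Hn n \<omega> p (xi p))"
        using good[OF pP xp] by auto
      also have "\<dots> \<le> (SUP x\<in>Xi. ereal (Hn n \<omega> p x))" by (rule SUP_upper[OF xp])
      also have "\<dots> \<le> (SUP x\<in>Xi. ereal (Hn n \<omega> phistar x))" by (rule opt)
      also have "\<dots> \<le> ereal (H phistar (xi phistar) + d)"
      proof (rule SUP_least)
        fix x assume x: "x \<in> Xi"
        have "Hn n \<omega> phistar x \<le> H phistar x + d" using good[OF ps x] by auto
        also have "\<dots> \<le> H phistar (xi phistar) + d" using xi_def[OF ps] x by auto
        finally show "ereal (Hn n \<omega> phistar x) \<le> ereal (H phistar (xi phistar) + d)" by simp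
      qed
      finally have "H p (xi p) - d \<le> H phistar (xi phistar) + d" by simp
      moreover have "H p (xi p) - H phistar (xi phistar) > eta"
        using etaP[OF pP] dd by (auto simp: p_def)
      ultimately show False using eta by (simp add: d_def)
    qed
  qed
  have lim: "(\<lambda>n. outer_prob M (Bad n)) \<longlonglongrightarrow> 0"
    unfolding Bad_def using A2[OF d] .
  show "(\<lambda>n. outer_prob M {\<omega> \<in> space M. dist (phihat n \<omega>) phistar > e}) \<longlonglongrightarrow> 0"
    by (rule real_tendsto_sandwich[OF _ _ tendsto_const lim])
       (simp_all add: outer_prob_nonneg outer_prob_mono[OF sub])
qed

end
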